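(* Let $W_{10}^l,W_{20}^l$ ($l\in[L]$) have i.i.d. $\mathcal N(0,1)$ entries, and (on the event $\|W_{10}^l\|\le c_{10}\sqrt n$, $\|W_{20}^l\|\le c_{20}\sqrt m$ for all $l$, with $c_{10}=1+2\sqrt m/\sqrt n$, $c_{20}=3$) let $\mathbf W_1\in B(\mathbf W_{10},R_1)$, $\mathbf W_2\in B(\mathbf W_{20},R_2)$. Then for every $l\in[L]$: for LISTA, $\|\mathbf x^l\|\le c^l_{\mathrm{ISTA};\mathbf x}$; for ADMM-CSNet, $\|\mathbf z^l\|\le c^l_{\mathrm{ADMM};\mathbf z}$ and $\|\mathbf u^l\|\le c^l_{\mathrm{ADMM};\mathbf u}$, where $c^0_{\mathrm{ISTA};\mathbf x}=\sqrt m C_x$, $c^0_{\mathrm{ADMM};\mathbf z}=\sqrt m C_z$, $c^0_{\mathrm{ADMM};\mathbf u}=\sqrt m C_u$ and $$c^l_{\mathrm{ISTA};\mathbf x}=L_\sigma\Big(c_{10}+\tfrac{R_1}{\sqrt n}\Big)\sqrt nC_y+L_\sigma\Big(c_{20}+\tfrac{R_2}{\sqrt m}\Big)c^{l-1}_{\mathrm{ISTA};\mathbf x}+\sigma(0)=O(\sqrt m),$$ $$c^l_{\mathrm{ADMM};\mathbf z}=L_\sigma\Big(c_{10}+\tfrac{R_1}{\sqrt n}\Big)\sqrt nC_y+L_\sigma\Big(c_{20}+\tfrac{R_2}{\sqrt m}\Big)c^{l-1}_{\mathrm{ADMM};\mathbf z}+L_\sigma\Big(1+c_{20}+\tfrac{R_2}{\sqrt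 m}\Big)c^{l-1}_{\mathrm{ADMM};\mathbf u}+\sigma(0)=O(\sqrt m),$$ $$c^l_{\mathrm{ADMM};\mathbf u}=\Big(c_{10}+\tfrac{R_1}{\sqrt n}\Big)\sqrt nC_y+\Big(c_{20}+\tfrac{R_2}{\sqrt m}\Big)c^{l-1}_{\mathrm{ADMM};\mathbf z}+\Big(c_{20}+\tfrac{R_2}{\sqrt m}+1\Big)c^{l-1}_{\mathrm{ADMM};\mathbf u}+c^l_{\mathrm{ADMM};\mathbf z}=O(\sqrt m).$$
   Context: Fix $L,n,m\ge1$, $\lambda>0$ and $\sigma(x)=\log(1+e^{x-\lambda})-\log(1+e^{-x-\lambda})$ (componentwise), $L_\sigma$-Lipschitz. Input $\mathbf y\in\mathbb R^n$ with $|y_i|\le C_y$. Parameters $W_1^l\in\mathbb R^{m\times n}$, $W_2^l\in\mathbb R^{m\times m}$; $\mathbf W_1=(W_1^l)_{l}$, $\mathbf W_2=(W_2^l)_l$, initial values $\mathbf W_{10},\mathbf W_{20}$; $B(\mathbf W_{10},R_1)=\{\mathbf W_1:\|\mathbf W_1-\mathbf W_{10}\|_F\le R_1\}$ (Frobenius over all entries), similarly for $\mathbf W_2$. LISTA: $\mathbf x^0$ with $|x^0_i|\le C_x$, $\mathbf x^l=\sigma\big(\frac1{\sqrt n}W_1^l\mathbf y+\frac1{\sqrt m}W_2^l\mathbf x^{l-1}\big)$. ADMM-CSNet: $\mathbf z^0,\mathbf u^0$ with $|z^0_i|\le C_z$, $|u^0_i|\le C_u$; $\mathbf x^l=\frac1{\sqrt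 n}W_1^l\mathbf y+\frac1{\sqrt m}W_2^l(\mathbf z^{l-1}-\mathbf u^{l-1})$, $\mathbf z^l=\sigma(\mathbf x^l+\mathbf u^{l-1})$, $\mathbf u^l=\mathbf u^{l-1}+\mathbf x^l-\mathbf z^l$. $\|\cdot\|$ is the Euclidean norm; $O(\cdot)$ is with respect to $m$. *)

theory Defs
  imports "HOL-Analysis.Analysis" "HOL-Library.Landau_Symbols"
begin

text \<open>Vectors of dimension d are functions nat => real, only indices < d matter.
 Matrices of size r x c are functions nat => nat => real, indices i < r, j < c.
 Layer-indexed weights are functions of the layer index l (layers 1..L).\<close>

definition sig :: "real \<Rightarrow> real \<Rightarrow> real" where
  "sig lam x = ln (1 + exp (x - lam)) - ln (1 + exp (- x - lam))"

definition vnorm :: "nat \<Rightarrow> (nat \<Rightarrow> real) \<Rightarrow> real" where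
  "vnorm d v = sqrt (\<Sum>i<d. (v i)^2)"

definition matvec :: "(nat \<Rightarrow> nat \<Rightarrow> real) \<Rightarrow> nat \<Rightarrow> (nat \<Rightarrow> real) \<Rightarrow> (nat \<Rightarrow> real)" where
  "matvec A c v = (\<lambda>i. \<Sum>j<c. A i j * v j)"

definition opnorm :: "nat \<Rightarrow> nat \<Rightarrow> (nat \<Rightarrow> nat \<Rightarrow> real) \<Rightarrow> real" where
  "opnorm r c A = Sup {vnorm r (matvec A c v) | v. vnorm c v \<le> 1}"

definition frob_dist :: "nat \<Rightarrow> nat \<Rightarrow> nat \<Rightarrow> (nat \<Rightarrow> nat \<Rightarrow> nat \<Rightarrow> real) \<Rightarrow> (nat \<Rightarrow> nat \<Rightarrow> nat \<Rightarrow> real) \<Rightarrow> real" where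
  "frob_dist L r c W V = sqrt (\<Sum>l\<in>{1..L}. \<Sum>i<r. \<Sum>j<c. (W l i j - V l i j)^2)"

primrec lista :: "real \<Rightarrow> nat \<Rightarrow> nat \<Rightarrow> (nat \<Rightarrow> nat \<Rightarrow> nat \<Rightarrow> real) \<Rightarrow> (nat \<Rightarrow> nat \<Rightarrow> nat \<Rightarrow> real)
   \<Rightarrow> (nat \<Rightarrow> real) \<Rightarrow> (nat \<Rightarrow> real) \<Rightarrow> nat \<Rightarrow> (nat \<Rightarrow> real)" where
  "lista lam n m W1 W2 y x0 0 = x0"
| "lista lam n m W1 W2 y x0 (Suc l) =
     (\<lambda>i. sig lam (1 / sqrt n * matvec (W1 (Suc l)) n y i
                  + 1 / sqrt m * matvec (W2 (Suc l)) m (lista lam n m W1 W2 y x0 l) i))"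

primrec admm :: "real \<Rightarrow> nat \<Rightarrow> nat \<Rightarrow> (nat \<Rightarrow> nat \<Rightarrow> nat \<Rightarrow> real) \<Rightarrow> (nat \<Rightarrow> nat \<Rightarrow> nat \<Rightarrow> real)
   \<Rightarrow> (nat \<Rightarrow> real) \<Rightarrow> (nat \<Rightarrow> real) \<Rightarrow> (nat \<Rightarrow> real) \<Rightarrow> nat \<Rightarrow> (nat \<Rightarrow> real) \<times> (nat \<Rightarrow> real)" where
  "admm lam n m W1 W2 y z0 u0 0 = (z0, u0)"
| "admm lam n m W1 W2 y z0 u0 (Suc l) =
     (let (z, u) = admm lam n m W1 W2 y z0 u0 l;
          x = (\<lambda>i. 1 / sqrt n * matvec (W1 (Suc l)) n y i
                    + 1 / sqrt m * matvec (W2 (Suc l)) m (\<lambda>k. z k - u k) i);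
          z' = (\<lambda>i. sig lam (x i + u i));
          u' = (\<lambda>i. u i + x i - z' i)
      in (z', u'))"

definition c10 :: "nat \<Rightarrow> nat \<Rightarrow> real" where
  "c10 n m = 1 + 2 * sqrt m / sqrt n"

definition c20 :: real where "c20 = 3"

primrec cISTA :: "real \<Rightarrow> real \<Rightarrow> nat \<Rightarrow> nat \<Rightarrow> real \<Rightarrow> real \<Rightarrow> real \<Rightarrow> real \<Rightarrow> nat \<Rightarrow> real" where
  "cISTA lam Ls n m R1 R2 Cy Cx 0 = sqrt m * Cx"
| "cISTA lam Ls n m R1 R2 Cy Cx (Suc l) =
     Ls * (c10 n m + R1 / sqrt n) * sqrt n * Cy
     + Ls * (c20 + R2 / sqrt m) * cISTA lam Ls n m R1 R2 Cy Cx l + sig lam 0"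

primrec cADMM :: "real \<Rightarrow> real \<Rightarrow> nat \<Rightarrow> nat \<Rightarrow> real \<Rightarrow> real \<Rightarrow> real \<Rightarrow> real \<Rightarrow> real \<Rightarrow> nat \<Rightarrow> real \<times> real" where
  "cADMM lam Ls n m R1 R2 Cy Cz Cu 0 = (sqrt m * Cz, sqrt m * Cu)"
| "cADMM lam Ls n m R1 R2 Cy Cz Cu (Suc l) =
     (let (cz, cu) = cADMM lam Ls n m R1 R2 Cy Cz Cu l;
          cz' = Ls * (c10 n m + R1 / sqrt n) * sqrt n * Cy
                + Ls * (c20 + R2 / sqrt m) * cz
                + Ls * (1 + c20 + R2 / sqrt m) * cu + sig lam 0;
          cu' = (c10 n m + R1 / sqrt n) * sqrt n * Cy
                + (c20 + R2 / sqrt m) * cz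
                + (c20 + R2 / sqrt m + 1) * cu + cz'
      in (cz', cu'))"

end

theory Submission
  imports Defs
begin

lemma vnorm_L2: "vnorm d v = L2_set v {..<d}"
  by (simp add: vnorm_def L2_set_def)

lemma vnorm_nonneg: "0 \<le> vnorm d v" by (simp add: vnorm_L2)

lemma vnorm_add: "vnorm d (\<lambda>i. f i + g i) \<le> vnorm d f + vnorm d g"
  unfolding vnorm_L2 by (rule L2_set_triangle_ineq)

lemma vnorm_diff: "vnorm d (\<lambda>i. f i - g i) \<le> vnorm d f + vnorm d g"
proof -
  have "vnorm d (\<lambda>i. f i - g i) = vnorm d (\<lambda>i. f i + (- g i))" by simp
  also have "\<dots> \<le> vnorm d f + vnorm d (\<lambda>i. - g i)" by (rule vnorm_add)
  also have "vnorm d (\<lambda>i. - g i) = vnorm d g" by (simp add: vnorm_def)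
  finally show ?thesis .
qed

lemma vnorm_scale: "vnorm d (\<lambda>i. a * f i) = \<bar>a\<bar> * vnorm d f"
proof -
  have "vnorm d (\<lambda>i. a * f i) = sqrt (a^2 * (\<Sum>i<d. (f i)^2))"
    by (simp add: vnorm_def power_mult_distrib sum_distrib_left)
  also have "\<dots> = \<bar>a\<bar> * vnorm d f" by (simp add: vnorm_def real_sqrt_mult)
  finally show ?thesis .
qed

lemma vnorm_const_bound:
  assumes "\<And>i. i < d \<Longrightarrow> \<bar>v i\<bar> \<le> C"
  shows "vnorm d v \<le> sqrt d * C"
proof -
  have "(\<Sum>i<d. (v i)^2) \<le> (\<Sum>i<d. C^2)"
  proof (rule sum_mono)
    fix i assume "i \<in> {..<d}"
    then have "\<bar>v i\<bar> \<le> C" using assms by simp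
    then have "\<bar>v i\<bar>^2 \<le> C^2" by (rule power_mono) simp
    then show "(v i)^2 \<le> C^2" by simp
  qed
  then have "vnorm d v \<le> sqrt (d * C^2)" by (simp add: vnorm_def)
  also have "\<dots> = sqrt d * \<bar>C\<bar>" by (simp add: real_sqrt_mult)
  finally have X: "vnorm d v \<le> sqrt d * \<bar>C\<bar>" .
  show ?thesis
  proof (cases "d = 0")
    case False
    then have "0 \<le> C" using assms[of 0] by auto
    then show ?thesis using X by simp
  qed (simp add: vnorm_def)
qed

definition frob :: "nat \<Rightarrow> nat \<Rightarrow> (nat \<Rightarrow> nat \<Rightarrow> real) \<Rightarrow> real" where
  "frob r c A = sqrt (\<Sum>i<r. \<Sum>j<c. (A i j)^2)"

lemma matvec_frob: "vnorm r (matvec A c v) \<le> frob r c A * vnorm c v"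
proof -
  have row: "(matvec A c v i)^2 \<le> (\<Sum>j<c. (A i j)^2) * (\<Sum>j<c. (v j)^2)" for i
  proof -
    have "\<bar>matvec A c v i\<bar> \<le> (\<Sum>j<c. \<bar>A i j\<bar> * \<bar>v j\<bar>)"
      unfolding matvec_def by (rule order_trans[OF sum_abs]) (simp add: abs_mult)
    also have "\<dots> \<le> L2_set (A i) {..<c} * L2_set v {..<c}" by (rule L2_set_mult_ineq)
    finally have "\<bar>matvec A c v i\<bar>^2 \<le> (L2_set (A i) {..<c} * L2_set v {..<c})^2"
      by (rule power_mono) simp
    also have "\<dots> = (\<Sum>j<c. (A i j)^2) * (\<Sum>j<c. (v j)^2)"
      by (simp add: L2_set_def power_mult_distrib sum_nonneg)
    finally show ?thesis by simp
  qed
  have "(\<Sum>i<r. (matvec A c v i)^2) \<le> (\<Sum>i<r. (\<Sum>j<c. (A i j)^2) * (\<Sum>j<c. (v j)^2))"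
    by (rule sum_mono) (rule row)
  also have "\<dots> = (\<Sum>i<r. \<Sum>j<c. (A i j)^2) * (\<Sum>j<c. (v j)^2)"
    by (simp add: sum_distrib_right)
  finally have "sqrt (\<Sum>i<r. (matvec A c v i)^2) \<le> sqrt ((\<Sum>i<r. \<Sum>j<c. (A i j)^2) * (\<Sum>j<c. (v j)^2))"
    by simp
  then show ?thesis by (simp add: vnorm_def frob_def real_sqrt_mult)
qed

lemma opnorm_bound: "vnorm r (matvec A c v) \<le> opnorm r c A * vnorm c v"
proof -
  let ?S = "{vnorm r (matvec A c v) | v. vnorm c v \<le> 1}"
  have bdd: "bdd_above ?S"
  proof (rule bdd_aboveI)
    fix x assume "x \<in> ?S"
    then obtain w where "x = vnorm r (matvec A c w)" "vnorm c w \<le> 1" by blast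
    moreover have "frob r c A * vnorm c w \<le> frob r c A * 1"
      using \<open>vnorm c w \<le> 1\<close> by (intro mult_left_mono) (auto simp: frob_def intro!: sum_nonneg)
    ultimately show "x \<le> frob r c A" using matvec_frob[of r A c w] by simp
  qed
  have up: "vnorm c w \<le> 1 \<Longrightarrow> vnorm r (matvec A c w) \<le> opnorm r c A" for w
    unfolding opnorm_def by (rule cSup_upper[OF _ bdd]) blast
  show ?thesis
  proof (cases "vnorm c v = 0")
    case True
    then have "\<forall>j\<in>{..<c}. v j = 0" unfolding vnorm_L2 by (simp add: L2_set_eq_0_iff)
    then have "matvec A c v i = 0" for i unfolding matvec_def by simp
    then show ?thesis using True by (simp add: vnorm_def)
  next
    case False
    define t where "t = vnorm c v"
    have tpos: "t > 0" using False vnorm_nonneg[of c v] unfolding t_def by simp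
    have "vnorm c (\<lambda>j. (1/t) * v j) = \<bar>1/t\<bar> * t" unfolding vnorm_scale t_def ..
    then have "vnorm c (\<lambda>j. (1/t) * v j) = 1" using tpos by simp
    then have "vnorm r (matvec A c (\<lambda>j. (1/t) * v j)) \<le> opnorm r c A" by (intro up) simp
    moreover have "matvec A c (\<lambda>j. (1/t) * v j) = (\<lambda>i. (1/t) * matvec A c v i)"
      unfolding matvec_def by (auto simp: sum_distrib_left intro!: sum.cong)
    ultimately have "vnorm r (\<lambda>i. (1/t) * matvec A c v i) \<le> opnorm r c A" by simp
    then have "\<bar>1/t\<bar> * vnorm r (matvec A c v) \<le> opnorm r c A" by (simp only: vnorm_scale)
    then have "(1/t) * vnorm r (matvec A c v) \<le> opnorm r c A" using tpos by simp
    then show ?thesis using tpos unfolding t_def[symmetric] by (simp add: field_simps)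
  qed
qed

lemma frob_le_dist:
  assumes "l \<in> {1..L}"
  shows "frob r c (\<lambda>i j. W l i j - V l i j) \<le> frob_dist L r c W V"
  unfolding frob_def frob_dist_def
  by (rule real_sqrt_le_mono, rule member_le_sum[OF assms]) (auto intro!: sum_nonneg)

lemma layer_bound:
  assumes "l \<in> {1..L}" "opnorm r c (V l) \<le> K" "frob_dist L r c W V \<le> R"
  shows "vnorm r (matvec (W l) c v) \<le> (K + R) * vnorm c v"
proof -
  have "matvec (W l) c v = (\<lambda>i. matvec (V l) c v i + matvec (\<lambda>i j. W l i j - V l i j) c v i)"
    unfolding matvec_def by (auto simp: algebra_simps sum_subtractf)
  then have "vnorm r (matvec (W l) c v) \<le> vnorm r (matvec (V l) c v) + vnorm r (matvec (\<lambda>i j. W l i j - V l i j) c v)"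
    using vnorm_add[of r "matvec (V l) c v" "matvec (\<lambda>i j. W l i j - V l i j) c v"] by simp
  also have "\<dots> \<le> opnorm r c (V l) * vnorm c v + frob r c (\<lambda>i j. W l i j - V l i j) * vnorm c v"
    by (intro add_mono opnorm_bound matvec_frob)
  also have "\<dots> \<le> K * vnorm c v + R * vnorm c v"
  proof (intro add_mono mult_right_mono)
    show "frob r c (\<lambda>i j. W l i j - V l i j) \<le> R"
      using frob_le_dist[OF assms(1), of r c W V] assms(3) by linarith
  qed (use assms vnorm_nonneg[of c v] in auto)
  finally show ?thesis by (simp add: algebra_simps)
qed


lemma sig0: "sig lam 0 = 0" by (simp add: sig_def)

lemma vnorm_sig:
  assumes Lip: "\<And>a b. \<bar>sig lam a - sig lam b\<bar> \<le> Ls * \<bar>a - b\<bar>"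
  shows "vnorm d (\<lambda>i. sig lam (w i)) \<le> Ls * vnorm d w"
proof -
  have Ls0: "0 \<le> Ls" using Lip[of 1 0] by (simp add: sig0)
  have "vnorm d (\<lambda>i. sig lam (w i)) = L2_set (\<lambda>i. \<bar>sig lam (w i)\<bar>) {..<d}"
    by (simp add: vnorm_def L2_set_def)
  also have "\<dots> \<le> L2_set (\<lambda>i. Ls * \<bar>w i\<bar>) {..<d}"
  proof (rule L2_set_mono)
    fix i
    have "\<bar>sig lam (w i) - sig lam 0\<bar> \<le> Ls * \<bar>w i - 0\<bar>" by (rule Lip)
    then show "\<bar>sig lam (w i)\<bar> \<le> Ls * \<bar>w i\<bar>" by (simp add: sig0)
  qed simp
  also have "\<dots> = Ls * L2_set (\<lambda>i. \<bar>w i\<bar>) {..<d}" using Ls0 by (simp add: L2_set_right_distrib)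
  also have "L2_set (\<lambda>i. \<bar>w i\<bar>) {..<d} = vnorm d w" by (simp add: vnorm_def L2_set_def)
  finally show ?thesis .
qed

lemma norms_main:
  fixes L n m :: nat and lam Ls Cy Cx Cz Cu R1 R2 :: real
    and y x0 z0 u0 :: "nat \<Rightarrow> real"
    and W1 W2 W10 W20 :: "nat \<Rightarrow> nat \<Rightarrow> nat \<Rightarrow> real"
  assumes "n \<ge> 1" and "m \<ge> 1"
    and Lip: "\<And>a b. \<bar>sig lam a - sig lam b\<bar> \<le> Ls * \<bar>a - b\<bar>"
    and hy: "\<And>i. i < n \<Longrightarrow> \<bar>y i\<bar> \<le> Cy"
    and hx: "\<And>i. i < m \<Longrightarrow> \<bar>x0 i\<bar> \<le> Cx"
    and hz: "\<And>i. i < m \<Longrightarrow> \<bar>z0 i\<bar> \<le> Cz"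
    and hu: "\<And>i. i < m \<Longrightarrow> \<bar>u0 i\<bar> \<le> Cu"
    and o1: "\<And>l. l \<in> {1..L} \<Longrightarrow> opnorm m n (W10 l) \<le> c10 n m * sqrt n"
    and o2: "\<And>l. l \<in> {1..L} \<Longrightarrow> opnorm m m (W20 l) \<le> c20 * sqrt m"
    and f1: "frob_dist L m n W1 W10 \<le> R1"
    and f2: "frob_dist L m m W2 W20 \<le> R2"
  shows "l \<le> L \<Longrightarrow>
            vnorm m (lista lam n m W1 W2 y x0 l) \<le> cISTA lam Ls n m R1 R2 Cy Cx l
          \<and> vnorm m (fst (admm lam n m W1 W2 y z0 u0 l)) \<le> fst (cADMM lam Ls n m R1 R2 Cy Cz Cu l)
          \<and> vnorm m (snd (admm lam n m W1 W2 y z0 u0 l)) \<le> snd (cADMM lam Ls n m R1 R2 Cy Cz Cu l)"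
proof (induction l)
  case 0
  have "vnorm m x0 \<le> sqrt m * Cx" by (rule vnorm_const_bound) (rule hx)
  moreover have "vnorm m z0 \<le> sqrt m * Cz" by (rule vnorm_const_bound) (rule hz)
  moreover have "vnorm m u0 \<le> sqrt m * Cu" by (rule vnorm_const_bound) (rule hu)
  ultimately show ?case by (simp only: lista.simps admm.simps cADMM.simps cISTA.simps fst_conv snd_conv)
next
  case (Suc l)
  define A where "A = (c10 n m + R1 / sqrt n) * sqrt n * Cy"
  define B where "B = c20 + R2 / sqrt m"
  have Ls0: "0 \<le> Ls" using Lip[of 1 0] by (simp add: sig0)
  have R10: "0 \<le> R1" using f1 unfolding frob_dist_def by (meson order_trans real_sqrt_ge_zero sum_nonneg zero_le_power2)
  have R20: "0 \<le> R2" using f2 unfolding frob_dist_def by (meson order_trans real_sqrt_ge_zero sum_nonneg zero_le_power2)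
  have B0: "0 \<le> B" using R20 by (simp add: B_def c20_def)
  have Cy0: "0 \<le> Cy" using hy[of 0] \<open>n \<ge> 1\<close> by auto
  have sn: "sqrt n > 0" using \<open>n \<ge> 1\<close> by simp
  have sm: "sqrt m > 0" using \<open>m \<ge> 1\<close> by simp
  have c100: "0 \<le> c10 n m" by (simp add: c10_def)
  have lL: "Suc l \<in> {1..L}" using Suc.prems by simp
  have hA: "vnorm m (\<lambda>i. 1 / sqrt n * matvec (W1 (Suc l)) n y i) \<le> A"
  proof -
    have "vnorm m (\<lambda>i. 1 / sqrt n * matvec (W1 (Suc l)) n y i) = (1 / sqrt n) * vnorm m (matvec (W1 (Suc l)) n y)"
      using vnorm_scale[of m "1 / sqrt n" "matvec (W1 (Suc l)) n y"] sn by simp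
    also have "\<dots> \<le> (1 / sqrt n) * ((c10 n m * sqrt n + R1) * vnorm n y)"
      using layer_bound[OF lL o1[OF lL] f1] sn by (intro mult_left_mono) auto
    also have "\<dots> \<le> (1 / sqrt n) * ((c10 n m * sqrt n + R1) * (sqrt n * Cy))"
      using vnorm_const_bound[of n y Cy] hy sn c100 R10
      by (intro mult_left_mono) auto
    also have "\<dots> = A" using sn by (simp add: A_def field_simps)
    finally show ?thesis .
  qed
  have hB: "vnorm m (\<lambda>i. 1 / sqrt m * matvec (W2 (Suc l)) m v i) \<le> B * vnorm m v" for v
  proof -
    have "vnorm m (\<lambda>i. 1 / sqrt m * matvec (W2 (Suc l)) m v i) = (1 / sqrt m) * vnorm m (matvec (W2 (Suc l)) m v)"
      using vnorm_scale[of m "1 / sqrt m" "matvec (W2 (Suc l)) m v"] sm by simp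
    also have "\<dots> \<le> (1 / sqrt m) * ((c20 * sqrt m + R2) * vnorm m v)"
      using layer_bound[OF lL o2[OF lL] f2] sm by (intro mult_left_mono) auto
    also have "\<dots> = B * vnorm m v" using sm by (simp add: B_def field_simps)
    finally show ?thesis .
  qed
  have IH: "vnorm m (lista lam n m W1 W2 y x0 l) \<le> cISTA lam Ls n m R1 R2 Cy Cx l"
      "vnorm m (fst (admm lam n m W1 W2 y z0 u0 l)) \<le> fst (cADMM lam Ls n m R1 R2 Cy Cz Cu l)"
      "vnorm m (snd (admm lam n m W1 W2 y z0 u0 l)) \<le> snd (cADMM lam Ls n m R1 R2 Cy Cz Cu l)"
    using Suc by auto
  have P1: "vnorm m (lista lam n m W1 W2 y x0 (Suc l)) \<le> cISTA lam Ls n m R1 R2 Cy Cx (Suc l)"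
  proof -
    let ?x = "lista lam n m W1 W2 y x0 l"
    have "vnorm m (lista lam n m W1 W2 y x0 (Suc l)) \<le> Ls * vnorm m (\<lambda>i. 1 / sqrt n * matvec (W1 (Suc l)) n y i
                  + 1 / sqrt m * matvec (W2 (Suc l)) m ?x i)"
      using vnorm_sig[OF Lip, of m "\<lambda>i. 1 / sqrt n * matvec (W1 (Suc l)) n y i
                  + 1 / sqrt m * matvec (W2 (Suc l)) m ?x i"] by (simp only: lista.simps)
    also have "\<dots> \<le> Ls * (A + B * cISTA lam Ls n m R1 R2 Cy Cx l)"
    proof (rule mult_left_mono[OF _ Ls0])
      have "B * vnorm m ?x \<le> B * cISTA lam Ls n m R1 R2 Cy Cx l" using IH(1) B0 by (rule mult_left_mono)
      then show "vnorm m (\<lambda>i. 1 / sqrt n * matvec (W1 (Suc l)) n y i + 1 / sqrt m * matvec (W2 (Suc l)) m ?x i)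
         \<le> A + B * cISTA lam Ls n m R1 R2 Cy Cx l"
        using vnorm_add[of m "\<lambda>i. 1 / sqrt n * matvec (W1 (Suc l)) n y i" "\<lambda>i. 1 / sqrt m * matvec (W2 (Suc l)) m ?x i"] hA hB[of ?x] by linarith
    qed
    also have "\<dots> = cISTA lam Ls n m R1 R2 Cy Cx (Suc l)"
      by (simp add: A_def B_def sig0 algebra_simps)
    finally show ?thesis .
  qed
  obtain z u where zu: "admm lam n m W1 W2 y z0 u0 l = (z, u)" by (cases "admm lam n m W1 W2 y z0 u0 l")
  obtain cz cu where czu: "cADMM lam Ls n m R1 R2 Cy Cz Cu l = (cz, cu)" by (cases "cADMM lam Ls n m R1 R2 Cy Cz Cu l")
  define xx where "xx = (\<lambda>i. 1 / sqrt n * matvec (W1 (Suc l)) n y i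
                    + 1 / sqrt m * matvec (W2 (Suc l)) m (\<lambda>k. z k - u k) i)"
  define cz' where "cz' = Ls * A + Ls * B * cz + Ls * (1 + B) * cu"
  have adm: "admm lam n m W1 W2 y z0 u0 (Suc l) = ((\<lambda>i. sig lam (xx i + u i)), (\<lambda>i. u i + xx i - sig lam (xx i + u i)))"
    by (simp add: zu xx_def Let_def)
  have cad: "cADMM lam Ls n m R1 R2 Cy Cz Cu (Suc l) = (cz', A + B * cz + (B + 1) * cu + cz')"
    by (simp add: czu cz'_def A_def B_def Let_def sig0 algebra_simps)
  have hz': "vnorm m z \<le> cz" and hu': "vnorm m u \<le> cu" using IH(2,3) zu czu by auto
  have "vnorm m (\<lambda>k. z k - u k) \<le> cz + cu" using vnorm_diff[of m z u] hz' hu' by simp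
  then have "B * vnorm m (\<lambda>k. z k - u k) \<le> B * (cz + cu)" using B0 by (rule mult_left_mono)
  then have hxx: "vnorm m xx \<le> A + B * (cz + cu)"
    unfolding xx_def using vnorm_add[of m "\<lambda>i. 1 / sqrt n * matvec (W1 (Suc l)) n y i" "\<lambda>i. 1 / sqrt m * matvec (W2 (Suc l)) m (\<lambda>k. z k - u k) i"] hA hB[of "\<lambda>k. z k - u k"] by linarith
  have "vnorm m (\<lambda>i. xx i + u i) \<le> A + B * (cz + cu) + cu"
    using vnorm_add[of m xx u] hxx hu' by simp
  then have "Ls * vnorm m (\<lambda>i. xx i + u i) \<le> Ls * (A + B * (cz + cu) + cu)"
    using Ls0 by (rule mult_left_mono)
  then have Z: "vnorm m (\<lambda>i. sig lam (xx i + u i)) \<le> cz'"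
    using vnorm_sig[OF Lip, of m "\<lambda>i. xx i + u i"] unfolding cz'_def by (simp add: algebra_simps)
  have "vnorm m (\<lambda>i. u i + xx i - sig lam (xx i + u i)) \<le> vnorm m (\<lambda>i. u i + xx i) + vnorm m (\<lambda>i. sig lam (xx i + u i))"
    by (rule vnorm_diff)
  also have "\<dots> \<le> (cu + (A + B * (cz + cu))) + cz'"
    using vnorm_add[of m u xx] hu' hxx Z by simp
  also have "\<dots> = A + B * cz + (B + 1) * cu + cz'" by (simp add: algebra_simps)
  finally have U: "vnorm m (\<lambda>i. u i + xx i - sig lam (xx i + u i)) \<le> A + B * cz + (B + 1) * cu + cz'" .
  have Z2: "vnorm m (fst (admm lam n m W1 W2 y z0 u0 (Suc l))) \<le> fst (cADMM lam Ls n m R1 R2 Cy Cz Cu (Suc l))"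
    unfolding adm cad fst_conv by (rule Z)
  have U2: "vnorm m (snd (admm lam n m W1 W2 y z0 u0 (Suc l))) \<le> snd (cADMM lam Ls n m R1 R2 Cy Cz Cu (Suc l))"
    unfolding adm cad snd_conv by (rule U)
  show ?case by (intro conjI P1 Z2 U2)
qed


lemma ev1: "eventually (\<lambda>k::nat. k \<ge> 1) at_top" by (rule eventually_ge_at_top)

lemma bo_const: "(\<lambda>k::nat. c) \<in> O(\<lambda>k. sqrt (real k))"
proof (rule bigoI[where c = "\<bar>c\<bar>"])
  show "eventually (\<lambda>k::nat. norm c \<le> \<bar>c\<bar> * norm (sqrt (real k))) at_top"
  proof (rule eventually_mono[OF ev1])
    fix k :: nat assume "k \<ge> 1"
    then have "1 \<le> sqrt (real k)" by simp
    then have "\<bar>c\<bar> * 1 \<le> \<bar>c\<bar> * sqrt (real k)" by (intro mult_left_mono) auto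
    then show "norm c \<le> \<bar>c\<bar> * norm (sqrt (real k))" by simp
  qed
qed

lemma bo_sqrt: "(\<lambda>k::nat. c * sqrt (real k)) \<in> O(\<lambda>k. sqrt (real k))"
  by (rule bigoI[where c = "\<bar>c\<bar>"]) (simp add: abs_mult)

lemma bo_bdd: "(\<lambda>k::nat. a + b * (c + d / sqrt (real k))) \<in> O(\<lambda>k. 1)"
proof (rule bigoI[where c = "\<bar>a\<bar> + \<bar>b\<bar> * (\<bar>c\<bar> + \<bar>d\<bar>)"])
  show "eventually (\<lambda>k::nat. norm (a + b * (c + d / sqrt (real k))) \<le> (\<bar>a\<bar> + \<bar>b\<bar> * (\<bar>c\<bar> + \<bar>d\<bar>)) * norm (1::real)) at_top"
  proof (rule eventually_mono[OF ev1])
    fix k :: nat assume "k \<ge> 1"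
    then have s1: "1 \<le> sqrt (real k)" by simp
    have "\<bar>d / sqrt (real k)\<bar> = \<bar>d\<bar> / sqrt (real k)" by (simp add: abs_div)
    also have "\<dots> \<le> \<bar>d\<bar>"
    proof -
      have "\<bar>d\<bar> * 1 \<le> \<bar>d\<bar> * sqrt (real k)" using s1 by (intro mult_left_mono) auto
      then show ?thesis using s1 by (simp add: divide_le_eq)
    qed
    finally have hd: "\<bar>d / sqrt (real k)\<bar> \<le> \<bar>d\<bar>" .
    have "\<bar>c + d / sqrt (real k)\<bar> \<le> \<bar>c\<bar> + \<bar>d\<bar>" using hd by linarith
    then have "\<bar>b\<bar> * \<bar>c + d / sqrt (real k)\<bar> \<le> \<bar>b\<bar> * (\<bar>c\<bar> + \<bar>d\<bar>)" by (intro mult_left_mono) auto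
    then show "norm (a + b * (c + d / sqrt (real k))) \<le> (\<bar>a\<bar> + \<bar>b\<bar> * (\<bar>c\<bar> + \<bar>d\<bar>)) * norm (1::real)"
    proof -
      have "\<bar>a + b * (c + d / sqrt (real k))\<bar> \<le> \<bar>a\<bar> + \<bar>b * (c + d / sqrt (real k))\<bar>"
        by (rule abs_triangle_ineq)
      also have "\<bar>b * (c + d / sqrt (real k))\<bar> = \<bar>b\<bar> * \<bar>c + d / sqrt (real k)\<bar>" by (rule abs_mult)
      finally show ?thesis using \<open>\<bar>b\<bar> * \<bar>c + d / sqrt (real k)\<bar> \<le> \<bar>b\<bar> * (\<bar>c\<bar> + \<bar>d\<bar>)\<close> by simp
    qed
  qed
qed

lemma bo_mult:
  assumes "f \<in> O(\<lambda>k::nat. 1)" "g \<in> O(\<lambda>k::nat. sqrt (real k))"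
  shows "(\<lambda>k. f k * g k) \<in> O(\<lambda>k. sqrt (real k))"
  using landau_o.big.mult[OF assms] by simp

lemma bo_A:
  assumes "n \<ge> 1"
  shows "(\<lambda>k::nat. a * (c10 n k + R1 / sqrt n) * sqrt n * Cy) \<in> O(\<lambda>k. sqrt (real k))"
proof -
  have sn: "sqrt (real n) > 0" using assms by simp
  have "(\<lambda>k::nat. a * (c10 n k + R1 / sqrt n) * sqrt n * Cy)
     = (\<lambda>k. a * (sqrt n + R1) * Cy + (2 * a * Cy) * sqrt (real k))"
    using sn by (auto simp: c10_def field_simps)
  moreover have "(\<lambda>k::nat. a * (sqrt n + R1) * Cy + (2 * a * Cy) * sqrt (real k)) \<in> O(\<lambda>k. sqrt (real k))"
    by (intro sum_in_bigo(1) bo_const bo_sqrt)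
  ultimately show ?thesis by simp
qed

lemma fstS: "fst (cADMM lam Ls n m R1 R2 Cy Cz Cu (Suc l)) =
     Ls * (c10 n m + R1 / sqrt n) * sqrt n * Cy
     + Ls * (c20 + R2 / sqrt m) * fst (cADMM lam Ls n m R1 R2 Cy Cz Cu l)
     + Ls * (1 + c20 + R2 / sqrt m) * snd (cADMM lam Ls n m R1 R2 Cy Cz Cu l) + sig lam 0"
  by (simp add: Let_def split_beta)

lemma sndS: "snd (cADMM lam Ls n m R1 R2 Cy Cz Cu (Suc l)) =
     (c10 n m + R1 / sqrt n) * sqrt n * Cy
     + (c20 + R2 / sqrt m) * fst (cADMM lam Ls n m R1 R2 Cy Cz Cu l)
     + (c20 + R2 / sqrt m + 1) * snd (cADMM lam Ls n m R1 R2 Cy Cz Cu l)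
     + fst (cADMM lam Ls n m R1 R2 Cy Cz Cu (Suc l))"
  by (simp add: Let_def split_beta)

lemma bigo_main:
  assumes "n \<ge> 1"
  shows "(\<lambda>k::nat. cISTA lam Ls n k R1 R2 Cy Cx l) \<in> O(\<lambda>k. sqrt (real k))
       \<and> (\<lambda>k::nat. fst (cADMM lam Ls n k R1 R2 Cy Cz Cu l)) \<in> O(\<lambda>k. sqrt (real k))
       \<and> (\<lambda>k::nat. snd (cADMM lam Ls n k R1 R2 Cy Cz Cu l)) \<in> O(\<lambda>k. sqrt (real k))"
proof (induction l)
  case 0
  have "(\<lambda>k::nat. sqrt (real k) * c) \<in> O(\<lambda>k. sqrt (real k))" for c
    using bo_sqrt[of c] by (simp add: mult.commute)
  then show ?case by simp
next
  case (Suc l)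
  have b1: "(\<lambda>k::nat. Ls * (c20 + R2 / sqrt (real k))) \<in> O(\<lambda>k. 1)"
    using bo_bdd[of 0 Ls c20 R2] by simp
  have b2: "(\<lambda>k::nat. Ls * (1 + c20 + R2 / sqrt (real k))) \<in> O(\<lambda>k. 1)"
    using bo_bdd[of 0 Ls "1 + c20" R2] by (simp add: add.assoc)
  have b3: "(\<lambda>k::nat. c20 + R2 / sqrt (real k)) \<in> O(\<lambda>k. 1)"
    using bo_bdd[of 0 1 c20 R2] by simp
  have b4: "(\<lambda>k::nat. c20 + R2 / sqrt (real k) + 1) \<in> O(\<lambda>k. 1)"
    using bo_bdd[of 1 1 c20 R2] by (simp add: algebra_simps)
  have A1: "(\<lambda>k::nat. Ls * (c10 n k + R1 / sqrt n) * sqrt n * Cy) \<in> O(\<lambda>k. sqrt (real k))"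
    by (rule bo_A[OF assms])
  have A2: "(\<lambda>k::nat. (c10 n k + R1 / sqrt n) * sqrt n * Cy) \<in> O(\<lambda>k. sqrt (real k))"
    using bo_A[OF assms, of 1] by simp
  have I: "(\<lambda>k::nat. cISTA lam Ls n k R1 R2 Cy Cx l) \<in> O(\<lambda>k. sqrt (real k))"
    and F: "(\<lambda>k::nat. fst (cADMM lam Ls n k R1 R2 Cy Cz Cu l)) \<in> O(\<lambda>k. sqrt (real k))"
    and S: "(\<lambda>k::nat. snd (cADMM lam Ls n k R1 R2 Cy Cz Cu l)) \<in> O(\<lambda>k. sqrt (real k))"
    using Suc by auto
  have I': "(\<lambda>k::nat. cISTA lam Ls n k R1 R2 Cy Cx (Suc l)) \<in> O(\<lambda>k. sqrt (real k))"
    unfolding cISTA.simps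
    by (intro sum_in_bigo(1) A1 bo_mult[OF b1 I] bo_const)
  have F': "(\<lambda>k::nat. fst (cADMM lam Ls n k R1 R2 Cy Cz Cu (Suc l))) \<in> O(\<lambda>k. sqrt (real k))"
    unfolding fstS
    by (intro sum_in_bigo(1) A1 bo_mult[OF b1 F] bo_mult[OF b2 S] bo_const)
  have S': "(\<lambda>k::nat. snd (cADMM lam Ls n k R1 R2 Cy Cz Cu (Suc l))) \<in> O(\<lambda>k. sqrt (real k))"
    unfolding sndS
    by (intro sum_in_bigo(1) A2 bo_mult[OF b3 F] bo_mult[OF b4 S] F')
  show ?case using I' F' S' by blast
qed

theorem lemma4:
  fixes L n m :: nat and lam Ls Cy Cx Cz Cu R1 R2 :: real
    and y x0 z0 u0 :: "nat \<Rightarrow> real"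
    and W1 W2 W10 W20 :: "nat \<Rightarrow> nat \<Rightarrow> nat \<Rightarrow> real"
  assumes "L \<ge> 1" and "n \<ge> 1" and "m \<ge> 1" and "lam > 0"
    and Lip: "\<And>a b. \<bar>sig lam a - sig lam b\<bar> \<le> Ls * \<bar>a - b\<bar>"
    and "\<And>i. i < n \<Longrightarrow> \<bar>y i\<bar> \<le> Cy"
    and "\<And>i. i < m \<Longrightarrow> \<bar>x0 i\<bar> \<le> Cx"
    and "\<And>i. i < m \<Longrightarrow> \<bar>z0 i\<bar> \<le> Cz"
    and "\<And>i. i < m \<Longrightarrow> \<bar>u0 i\<bar> \<le> Cu"
    and "\<And>l. l \<in> {1..L} \<Longrightarrow> opnorm m n (W10 l) \<le> c10 n m * sqrt n"
    and "\<And>l. l \<in> {1..L} \<Longrightarrow> opnorm m m (W20 l) \<le> c20 * sqrt m"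
    and "frob_dist L m n W1 W10 \<le> R1"
    and "frob_dist L m m W2 W20 \<le> R2"
  shows "(\<forall>l\<in>{1..L}.
            vnorm m (lista lam n m W1 W2 y x0 l) \<le> cISTA lam Ls n m R1 R2 Cy Cx l
          \<and> vnorm m (fst (admm lam n m W1 W2 y z0 u0 l)) \<le> fst (cADMM lam Ls n m R1 R2 Cy Cz Cu l)
          \<and> vnorm m (snd (admm lam n m W1 W2 y z0 u0 l)) \<le> snd (cADMM lam Ls n m R1 R2 Cy Cz Cu l))
       \<and> (\<forall>l\<in>{1..L}.
            (\<lambda>k::nat. cISTA lam Ls n k R1 R2 Cy Cx l) \<in> O(\<lambda>k. sqrt (real k))
          \<and> (\<lambda>k::nat. fst (cADMM lam Ls n k R1 R2 Cy Cz Cu l)) \<in> O(\<lambda>k. sqrt (real k))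
          \<and> (\<lambda>k::nat. snd (cADMM lam Ls n k R1 R2 Cy Cz Cu l)) \<in> O(\<lambda>k. sqrt (real k)))"
proof (intro conjI ballI)
  fix l assume l: "l \<in> {1..L}"
  note N = norms_main[OF assms(2,3,5,6,7,8,9,10,11,12,13), where l=l]
  show "vnorm m (lista lam n m W1 W2 y x0 l) \<le> cISTA lam Ls n m R1 R2 Cy Cx l" using N l by auto
  show "vnorm m (fst (admm lam n m W1 W2 y z0 u0 l)) \<le> fst (cADMM lam Ls n m R1 R2 Cy Cz Cu l)" using N l by auto
  show "vnorm m (snd (admm lam n m W1 W2 y z0 u0 l)) \<le> snd (cADMM lam Ls n m R1 R2 Cy Cz Cu l)" using N l by auto
next
  fix l
  note B = bigo_main[OF assms(2), where l=l]
  show "(\<lambda>k::nat. cISTA lam Ls n k R1 R2 Cy Cx l) \<in> O(\<lambda>k. sqrt (real k))" using B by blast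
  show "(\<lambda>k::nat. fst (cADMM lam Ls n k R1 R2 Cy Cz Cu l)) \<in> O(\<lambda>k. sqrt (real k))" using B by blast
  show "(\<lambda>k::nat. snd (cADMM lam Ls n k R1 R2 Cy Cz Cu l)) \<in> O(\<lambda>k. sqrt (real k))" using B by blast
qed

end
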